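(* Let $G$ be a finite transitive permutation group with point stabiliser $H$ and let $p$ be a prime. Suppose there exists $T\le H$ such that (i) $N_G(T)\not\le H$, and (ii) for every $S\in\mathrm{Syl}_p(H)$, the group $\langle T,S\rangle$ contains a normal subgroup $H_0$ of $H$ which is weakly closed in $G$ and satisfies $H=N_G(H_0)$. Then $G$ has a subdegree divisible by $p$.
   Context: A subgroup $H_0$ of $H$ is weakly closed in $G$ if whenever $H_0^g\le H$ for some $g\in G$, there exists $h\in H$ with $H_0^g=H_0^h$. A subdegree is the size of an orbit of a point stabiliser. $\mathrm{Syl}_p(H)$ is the set of Sylow $p$-subgroups of $H$. *)

theory Defs
  imports "HOL-Algebra.Algebra" "HOL-Computational_Algebra.Factorial_Ring"
begin

definition Syl :: "nat \<Rightarrow> ('a, 'b) monoid_scheme \<Rightarrow> 'a set \<Rightarrow> 'a set set" where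
  "Syl p G K = {P. subgroup P (G\<lparr>carrier := K\<rparr>) \<and> card P = p ^ multiplicity p (card K)}"

definition weakly_closed :: "('a, 'b) monoid_scheme \<Rightarrow> 'a set \<Rightarrow> 'a set \<Rightarrow> bool" where
  "weakly_closed G H H0 \<longleftrightarrow> H0 \<subseteq> H \<and>
     (\<forall>g \<in> carrier G. (inv\<^bsub>G\<^esub> g) <#\<^bsub>G\<^esub> H0 #>\<^bsub>G\<^esub> g \<subseteq> H \<longrightarrow>
        (\<exists>h \<in> H. (inv\<^bsub>G\<^esub> g) <#\<^bsub>G\<^esub> H0 #>\<^bsub>G\<^esub> g = (inv\<^bsub>G\<^esub> h) <#\<^bsub>G\<^esub> H0 #>\<^bsub>G\<^esub> h))"

end

theory Submission
  imports Defs
begin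

lemma (in group) conj_back:
  assumes "M \<subseteq> carrier G" "g \<in> carrier G" "inv g <#\<^bsub>G\<^esub> M #> g = M"
  shows "g <#\<^bsub>G\<^esub> M #> inv g = M"
proof -
  have "g <#\<^bsub>G\<^esub> M #> inv g = g <#\<^bsub>G\<^esub> (inv g <#\<^bsub>G\<^esub> M #> g) #> inv g" using assms(3) by simp
  also have "\<dots> = M"
  proof
    show "g <#\<^bsub>G\<^esub> (inv g <#\<^bsub>G\<^esub> M #> g) #> inv g \<subseteq> M"
    proof
      fix y assume "y \<in> g <#\<^bsub>G\<^esub> (inv g <#\<^bsub>G\<^esub> M #> g) #> inv g"
      then obtain x where x: "x \<in> M" "y = g \<otimes> (inv g \<otimes> x \<otimes> g) \<otimes> inv g"
        unfolding l_coset_def r_coset_def by blast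
      have xG: "x \<in> carrier G" using x assms(1) by blast
      have "g \<otimes> (inv g \<otimes> x \<otimes> g) \<otimes> inv g = x"
      proof -
        have "g \<otimes> (inv g \<otimes> x \<otimes> g) \<otimes> inv g = x \<otimes> g \<otimes> inv g"
          using xG assms(2) by (simp add: m_assoc[symmetric])
        also have "\<dots> = x" using xG assms(2) by (simp add: m_assoc)
        finally show ?thesis .
      qed
      thus "y \<in> M" using x by simp
    qed
    show "M \<subseteq> g <#\<^bsub>G\<^esub> (inv g <#\<^bsub>G\<^esub> M #> g) #> inv g"
    proof
      fix x assume x: "x \<in> M"
      have xG: "x \<in> carrier G" using x assms(1) by blast
      have "g \<otimes> ((inv g \<otimes> x) \<otimes> g) \<otimes> inv g = x \<otimes> g \<otimes> inv g"
        using xG assms(2) by (simp add: m_assoc[symmetric])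
      also have "\<dots> = x" using xG assms(2) by (simp add: m_assoc)
      finally have "x = g \<otimes> ((inv g \<otimes> x) \<otimes> g) \<otimes> inv g" by simp
      thus "x \<in> g <#\<^bsub>G\<^esub> (inv g <#\<^bsub>G\<^esub> M #> g) #> inv g"
        using x unfolding l_coset_def r_coset_def by blast
    qed
  qed
  finally show ?thesis .
qed

lemma (in group_action) inv_cancel_act:
  assumes "x \<in> E" "g \<in> carrier G"
  shows "\<phi> (inv g) (\<phi> g x) = x"
proof -
  have grp: "group G" using group_hom group_hom.axioms(1) by blast
  have "\<phi> (inv g) (\<phi> g x) = \<phi> (inv g \<otimes> g) x"
    using composition_rule[of x "inv g" g] assms grp by (simp add: group.inv_closed)
  also have "\<dots> = \<phi> \<one> x" using assms grp by (simp add: group.l_inv)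
  also have "\<dots> = x" using id_eq_one assms(1) by (metis restrict_apply')
  finally show ?thesis .
qed

theorem lemma2p2:
  fixes G (structure) and \<Omega> :: "'b set" and \<phi> :: "'a \<Rightarrow> 'b \<Rightarrow> 'b"
    and \<alpha> :: 'b and H T :: "'a set" and p :: nat
  assumes "faithful_action G \<Omega> \<phi>"
    and "transitive_action G \<Omega> \<phi>"
    and "finite (carrier G)"
    and "\<alpha> \<in> \<Omega>"
    and "H = stabilizer G \<phi> \<alpha>"
    and "Factorial_Ring.prime p"
    and "subgroup T (G\<lparr>carrier := H\<rparr>)"
    and "\<not> normalizer G T \<subseteq> H"
    and "\<forall>S \<in> Syl p G H. \<exists>H0. H0 \<subseteq> generate G (T \<union> S)
           \<and> normal H0 (G\<lparr>carrier := H\<rparr>) \<and> weakly_closed G H H0 \<and> H = normalizer G H0"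
  shows "\<exists>\<beta> \<in> \<Omega>. p dvd card (orbit (G\<lparr>carrier := H\<rparr>) \<phi> \<beta>)"
proof (rule ccontr)
  assume nd: "\<not> (\<exists>\<beta>\<in>\<Omega>. p dvd card (orbit (G\<lparr>carrier := H\<rparr>) \<phi> \<beta>))"
  interpret A: transitive_action G \<Omega> \<phi> by fact
  interpret grp: group G using A.group_hom group_hom.axioms(1) by blast
  have Hsub: "subgroup H G" using assms(4,5) A.stabilizer_subgroup by simp
  obtain g where g: "g \<in> normalizer G T" "g \<notin> H" using assms(8) by blast
  have gG: "g \<in> carrier G" using g unfolding normalizer_def stabilizer_def by simp
  have Tsub: "T \<subseteq> H" using assms(7) subgroup.subset by fastforce
  have TG: "T \<subseteq> carrier G" using Tsub Hsub subgroup.subset by blast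
  have gT: "g <#\<^bsub>G\<^esub> T #> inv g = T" using g(1) TG unfolding normalizer_def stabilizer_def by simp
  define \<beta> where "\<beta> = \<phi> g \<alpha>"
  have b: "\<beta> \<in> \<Omega>" using A.element_image gG assms(4) \<beta>_def by blast
  define L where "L = stabilizer G \<phi> \<beta>"
  have Lsub: "subgroup L G" using A.stabilizer_subgroup b L_def by simp
  define K where "K = H \<inter> L"
  have Ksub: "subgroup K G" using grp.subgroups_Inter_pair Hsub Lsub K_def by simp
  interpret B: group_action "G\<lparr>carrier := H\<rparr>" \<Omega> \<phi> using A.induced_action Hsub by simp
  have stabK: "stabilizer (G\<lparr>carrier := H\<rparr>) \<phi> \<beta> = K"
    unfolding K_def L_def stabilizer_def using Hsub subgroup.subset by auto
  have finH: "finite H" using assms(3) Hsub subgroup.subset finite_subset by metis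
  have finK: "finite K" using finH K_def by simp
  have os: "card (orbit (G\<lparr>carrier := H\<rparr>) \<phi> \<beta>) * card K = card H"
    using B.orbit_stabilizer_theorem[OF b] stabK by (simp add: order_def)
  have ndv: "\<not> p dvd card (orbit (G\<lparr>carrier := H\<rparr>) \<phi> \<beta>)" using nd b by blast
  have cardK0: "card K \<noteq> 0" using finK subgroup.one_closed[OF Ksub] by auto
  have cardH0: "card H \<noteq> 0" using finH subgroup.one_closed[OF Hsub] by auto
  have orb0: "card (orbit (G\<lparr>carrier := H\<rparr>) \<phi> \<beta>) \<noteq> 0" proof assume "card (orbit (G\<lparr>carrier := H\<rparr>) \<phi> \<beta>) = 0" hence "card H = 0" using os by simp thus False using cardH0 by simp qed
  have mult: "multiplicity p (card H) = multiplicity p (card K)"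
  proof -
    have "multiplicity p (card H) = multiplicity p (card (orbit (G\<lparr>carrier := H\<rparr>) \<phi> \<beta>)) + multiplicity p (card K)"
      using os[symmetric] prime_elem_multiplicity_mult_distrib[of p] assms(6) orb0 cardK0
      by (metis prime_imp_prime_elem)
    thus ?thesis using not_dvd_imp_multiplicity_0[OF ndv] by simp
  qed
  obtain m where m: "card K = p ^ multiplicity p (card K) * m"
    using multiplicity_dvd[of p "card K"] by (metis dvdE)
  obtain P where P: "subgroup P (G\<lparr>carrier := K\<rparr>)" "card P = p ^ multiplicity p (card K)"
    using sylow_thm[OF assms(6) grp.subgroup_imp_group[OF Ksub], of "multiplicity p (card K)" m]
      m finK by (auto simp: order_def)
  have PG: "subgroup P G" using grp.incl_subgroup[OF Ksub P(1)] .
  have PK: "P \<subseteq> K" using P(1) subgroup.subset by fastforce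
  have PH: "subgroup P (G\<lparr>carrier := H\<rparr>)" using grp.subgroup_incl[OF PG Hsub] PK K_def by auto
  have PSyl: "P \<in> Syl p G H" unfolding Syl_def using PH P(2) mult by simp
  obtain H0 where H0: "H0 \<subseteq> generate G (T \<union> P)" "normal H0 (G\<lparr>carrier := H\<rparr>)"
      "weakly_closed G H H0" "H = normalizer G H0"
    using assms(9) PSyl by blast
  have TL: "T \<subseteq> L"
  proof
    fix t assume t: "t \<in> T"
    then have "t \<in> g <#\<^bsub>G\<^esub> T #> inv g" using gT by simp
    then obtain t' where t': "t' \<in> T" "t = g \<otimes> t' \<otimes> inv g"
      unfolding l_coset_def r_coset_def by auto
    have t'G: "t' \<in> carrier G" using t' TG by blast
    have t'a: "\<phi> t' \<alpha> = \<alpha>" using t' Tsub assms(5) unfolding stabilizer_def by auto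
    have tG: "t \<in> carrier G" using t TG by blast
    have e1: "\<phi> t \<beta> = \<phi> (g \<otimes> t') (\<phi> (inv g) \<beta>)"
      using A.composition_rule[OF b, of "g \<otimes> t'" "inv g"] t'(2) gG t'G by simp
    have e2: "\<phi> (inv g) \<beta> = \<alpha>" using A.inv_cancel_act[OF assms(4) gG] \<beta>_def by simp
    have e3: "\<phi> (g \<otimes> t') \<alpha> = \<phi> g (\<phi> t' \<alpha>)"
      using A.composition_rule[OF assms(4) gG t'G] .
    have "\<phi> t \<beta> = \<beta>" using e1 e2 e3 t'a \<beta>_def by simp
    then show "t \<in> L" using tG L_def unfolding stabilizer_def by simp
  qed
  have "generate G (T \<union> P) \<subseteq> L"
    using grp.generate_subgroup_incl[OF _ Lsub] TL PK K_def by auto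
  hence H0L: "H0 \<subseteq> L" using H0(1) by auto
  have H0H: "H0 \<subseteq> H" using H0(2) normal_imp_subgroup subgroup.subset by fastforce
  have H0G: "H0 \<subseteq> carrier G" using H0H Hsub subgroup.subset by blast
  have conjsub: "inv g <#\<^bsub>G\<^esub> H0 #> g \<subseteq> H"
  proof
    fix x assume "x \<in> inv g <#\<^bsub>G\<^esub> H0 #> g"
    then obtain k where k: "k \<in> H0" "x = inv g \<otimes> k \<otimes> g"
      by (auto simp: l_coset_def r_coset_def)
    have kG: "k \<in> carrier G" using k H0G by blast
    have kb: "\<phi> k \<beta> = \<beta>" using k H0L L_def unfolding stabilizer_def by auto
    have xG: "x \<in> carrier G" using k kG gG by simp
    have e1: "\<phi> x \<alpha> = \<phi> (inv g \<otimes> k) \<beta>"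
      using A.composition_rule[OF assms(4), of "inv g \<otimes> k" g] k(2) gG kG \<beta>_def by simp
    have e2: "\<phi> (inv g \<otimes> k) \<beta> = \<phi> (inv g) (\<phi> k \<beta>)"
      using A.composition_rule[OF b, of "inv g" k] gG kG by simp
    have "\<phi> x \<alpha> = \<alpha>" using e1 e2 kb \<beta>_def A.inv_cancel_act[OF assms(4) gG] by simp
    then show "x \<in> H" using xG assms(5) unfolding stabilizer_def by simp
  qed
  obtain h where h: "h \<in> H" "inv g <#\<^bsub>G\<^esub> H0 #> g = inv h <#\<^bsub>G\<^esub> H0 #> h"
    using H0(3) gG conjsub unfolding weakly_closed_def by blast
  have hG: "h \<in> carrier G" using h Hsub subgroup.subset by blast
  interpret N: normal H0 "G\<lparr>carrier := H\<rparr>" by (rule H0(2))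
  have hh: "inv h <#\<^bsub>G\<^esub> H0 #> h = H0"
  proof
    show "inv h <#\<^bsub>G\<^esub> H0 #> h \<subseteq> H0"
    proof
      fix x assume "x \<in> inv h <#\<^bsub>G\<^esub> H0 #> h"
      then obtain k where k: "k \<in> H0" "x = inv h \<otimes> k \<otimes> h"
        by (auto simp: l_coset_def r_coset_def)
      have "inv\<^bsub>G\<lparr>carrier := H\<rparr>\<^esub> h \<otimes>\<^bsub>G\<lparr>carrier := H\<rparr>\<^esub> k \<otimes>\<^bsub>G\<lparr>carrier := H\<rparr>\<^esub> h \<in> H0"
        using N.inv_op_closed1[of h k] h k by simp
      thus "x \<in> H0" using k h Hsub by simp
    qed
    show "H0 \<subseteq> inv h <#\<^bsub>G\<^esub> H0 #> h"
    proof
      fix k assume k: "k \<in> H0"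
      have kG: "k \<in> carrier G" using k H0G by blast
      have "h \<otimes>\<^bsub>G\<lparr>carrier := H\<rparr>\<^esub> k \<otimes>\<^bsub>G\<lparr>carrier := H\<rparr>\<^esub> inv\<^bsub>G\<lparr>carrier := H\<rparr>\<^esub> h \<in> H0"
        using N.inv_op_closed2[of h k] h k by simp
      hence k': "h \<otimes> k \<otimes> inv h \<in> H0" using k h Hsub by simp
      have "inv h \<otimes> (h \<otimes> k \<otimes> inv h) \<otimes> h = k \<otimes> inv h \<otimes> h"
        using hG kG by (simp add: grp.m_assoc[symmetric])
      also have "\<dots> = k" using hG kG by (simp add: grp.m_assoc)
      finally have "k = inv h \<otimes> (h \<otimes> k \<otimes> inv h) \<otimes> h" by simp
      thus "k \<in> inv h <#\<^bsub>G\<^esub> H0 #> h" using k' unfolding l_coset_def r_coset_def by blast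
    qed
  qed
  have "g <#\<^bsub>G\<^esub> H0 #> inv g = H0" using grp.conj_back[OF H0G gG] h(2) hh by simp
  hence "g \<in> normalizer G H0" unfolding normalizer_def stabilizer_def using gG H0G by simp
  thus False using H0(4) g(2) by simp
qed

end
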